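(* Let $G$ be a finite group and let $V$ be an abelian normal $2$-subgroup of $G$ such that $C_G(V)\leq V$. Let $\alpha$ be an automorphism of $G$ such that $[V,\alpha]=1$ and $\alpha^2\in\mathrm{Inn}(G)$. Then $[G,\alpha] \leq V$, and if $G$ acts fixed point freely on $V/\Phi(V)$, then the order of $\alpha$ is at most the exponent of $V$.
   Context: $\mathrm{Inn}(G)$ denotes the group of inner automorphisms of $G$. *)

theory Defs
  imports "HOL-Algebra.Algebra"
begin

(* Frattini subgroup of a subgroup H of G: intersection of the maximal subgroups of H
   (intersected with H, so that it equals H when H has no maximal subgroup, i.e. H trivial). *)
definition frattini :: "('a, 'b) monoid_scheme \<Rightarrow> 'a set \<Rightarrow> 'a set" where
  "frattini G H = H \<inter> \<Inter> {M. subgroup M G \<and> M \<subset> H \<and>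
      (\<forall>K. subgroup K G \<and> M \<subseteq> K \<and> K \<subseteq> H \<longrightarrow> K = M \<or> K = H)}"

definition subgroup_exponent :: "('a, 'b) monoid_scheme \<Rightarrow> 'a set \<Rightarrow> nat" where
  "subgroup_exponent G H = (LEAST n. 0 < n \<and> (\<forall>h\<in>H. h [^]\<^bsub>G\<^esub> n = \<one>\<^bsub>G\<^esub>))"

definition commutator_aut :: "('a, 'b) monoid_scheme \<Rightarrow> ('a \<Rightarrow> 'a) \<Rightarrow> 'a set" where
  "commutator_aut G \<alpha> = generate G {inv\<^bsub>G\<^esub> g \<otimes>\<^bsub>G\<^esub> \<alpha> g | g. g \<in> carrier G}"

end

theory Submission
  imports Defs
begin

theorem lemma3p4:
  fixes G :: "('a, 'b) monoid_scheme" and V :: "'a set" and \<alpha> :: "'a \<Rightarrow> 'a"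
  assumes "group G" and "finite (carrier G)"
    and "V \<lhd> G"
    and "comm_group (G\<lparr>carrier := V\<rparr>)"
    and "\<exists>k. card V = 2 ^ k"
    and "\<forall>g\<in>carrier G. (\<forall>v\<in>V. g \<otimes>\<^bsub>G\<^esub> v = v \<otimes>\<^bsub>G\<^esub> g) \<longrightarrow> g \<in> V"
    and "\<alpha> \<in> auto G"
    and "\<forall>v\<in>V. \<alpha> v = v"
    and "\<exists>x\<in>carrier G. \<forall>y\<in>carrier G. \<alpha> (\<alpha> y) = x \<otimes>\<^bsub>G\<^esub> y \<otimes>\<^bsub>G\<^esub> inv\<^bsub>G\<^esub> x"
  shows "commutator_aut G \<alpha> \<subseteq> V \<and>
    ((\<forall>v\<in>V. (\<forall>g\<in>carrier G. frattini G V #>\<^bsub>G\<^esub> (g \<otimes>\<^bsub>G\<^esub> v \<otimes>\<^bsub>G\<^esub> inv\<^bsub>G\<^esub> g)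
                                  = frattini G V #>\<^bsub>G\<^esub> v)
             \<longrightarrow> v \<in> frattini G V)
     \<longrightarrow> group.ord (AutoGroup G) \<alpha> \<le> subgroup_exponent G V)"
proof -
  interpret G: group G by fact
  have Vsub: "subgroup V G" using assms(3) normal_imp_subgroup by blast
  interpret V: subgroup V G by (rule Vsub)
  have hom: "\<alpha> \<in> hom G G" and bij: "\<alpha> \<in> Bij (carrier G)"
    using assms(7) by (auto simp: auto_def)
  interpret h: group_hom G G \<alpha>
    by (rule group_hom.intro, rule assms(1), rule assms(1), rule group_hom_axioms.intro, rule hom)
  have dV: "inv\<^bsub>G\<^esub> g \<otimes>\<^bsub>G\<^esub> \<alpha> g \<in> V" if g: "g \<in> carrier G" for g
  proof -
    define a where "a = \<alpha> g"
    have a: "a \<in> carrier G" using g a_def by simp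
    define c where "c = inv\<^bsub>G\<^esub> a \<otimes>\<^bsub>G\<^esub> g"
    have c: "c \<in> carrier G" using a g c_def by simp
    have "c \<otimes>\<^bsub>G\<^esub> v = v \<otimes>\<^bsub>G\<^esub> c" if v: "v \<in> V" for v
    proof -
      have vc: "v \<in> carrier G" using v by auto
      have inV: "g \<otimes>\<^bsub>G\<^esub> v \<otimes>\<^bsub>G\<^esub> inv\<^bsub>G\<^esub> g \<in> V"
        by (rule normal.inv_op_closed2[OF assms(3) g v])
      have "\<alpha> (g \<otimes>\<^bsub>G\<^esub> v \<otimes>\<^bsub>G\<^esub> inv\<^bsub>G\<^esub> g) = a \<otimes>\<^bsub>G\<^esub> v \<otimes>\<^bsub>G\<^esub> inv\<^bsub>G\<^esub> a"
        using g vc v assms(8) a_def by (simp add: h.hom_inv)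
      hence eq: "g \<otimes>\<^bsub>G\<^esub> v \<otimes>\<^bsub>G\<^esub> inv\<^bsub>G\<^esub> g = a \<otimes>\<^bsub>G\<^esub> v \<otimes>\<^bsub>G\<^esub> inv\<^bsub>G\<^esub> a"
        using assms(8) inV by simp
      have "c \<otimes>\<^bsub>G\<^esub> v = inv\<^bsub>G\<^esub> a \<otimes>\<^bsub>G\<^esub> (g \<otimes>\<^bsub>G\<^esub> v \<otimes>\<^bsub>G\<^esub> inv\<^bsub>G\<^esub> g) \<otimes>\<^bsub>G\<^esub> g"
        using a g vc c_def by (simp add: G.m_assoc)
      also have "\<dots> = inv\<^bsub>G\<^esub> a \<otimes>\<^bsub>G\<^esub> (a \<otimes>\<^bsub>G\<^esub> v \<otimes>\<^bsub>G\<^esub> inv\<^bsub>G\<^esub> a) \<otimes>\<^bsub>G\<^esub> g"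
        using eq by simp
      also have "\<dots> = v \<otimes>\<^bsub>G\<^esub> c"
      proof -
        have hl: "\<forall>y\<in>carrier G. inv\<^bsub>G\<^esub> a \<otimes>\<^bsub>G\<^esub> (a \<otimes>\<^bsub>G\<^esub> y) = y"
          using a by (simp add: G.m_assoc[symmetric])
        show ?thesis using a g vc c_def hl by (simp add: G.m_assoc)
      qed
      finally show ?thesis .
    qed
    hence "c \<in> V" using assms(6) c by blast
    hence "inv\<^bsub>G\<^esub> c \<in> V" by simp
    moreover have "inv\<^bsub>G\<^esub> c = inv\<^bsub>G\<^esub> g \<otimes>\<^bsub>G\<^esub> a"
      using a g c_def by (simp add: G.inv_mult_group)
    ultimately show ?thesis using a_def by simp
  qed
  have part1: "commutator_aut G \<alpha> \<subseteq> V"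
    unfolding commutator_aut_def
    by (rule G.generate_subgroup_incl[OF _ Vsub]) (auto intro: dV)
  define A where "A = AutoGroup G"
  interpret A: group A unfolding A_def by (rule G.AutoGroup)
  have carrA: "carrier A = auto G" by (simp add: A_def AutoGroup_def)
  have aA: "\<alpha> \<in> carrier A" using assms(7) carrA by simp
  have multA: "(f \<otimes>\<^bsub>A\<^esub> g') x = f (g' x)" if "f \<in> carrier A" "g' \<in> carrier A" "x \<in> carrier G" for f g' x
    using that by (simp add: carrA A_def AutoGroup_def BijGroup_def auto_def compose_def)
  have pw: "\<forall>x\<in>carrier G. (\<alpha> [^]\<^bsub>A\<^esub> n) x = x \<otimes>\<^bsub>G\<^esub> (inv\<^bsub>G\<^esub> x \<otimes>\<^bsub>G\<^esub> \<alpha> x) [^]\<^bsub>G\<^esub> n" for n :: nat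
  proof (induction n)
    case 0
    then show ?case by (simp add: A_def AutoGroup_def BijGroup_def)
  next
    case (Suc n)
    show ?case
    proof
      fix x assume x: "x \<in> carrier G"
      define dx where "dx = inv\<^bsub>G\<^esub> x \<otimes>\<^bsub>G\<^esub> \<alpha> x"
      have dxV: "dx \<in> V" using dV x dx_def by simp
      have dxc: "dx \<in> carrier G" using dxV by auto
      have pV0: "dx [^]\<^bsub>G\<^esub> (m::nat) \<in> V" for m
        by (induction m) (simp_all add: dxV V.m_closed)
      have pV: "dx [^]\<^bsub>G\<^esub> n \<in> V" by (rule pV0)
      have ax: "\<alpha> x = x \<otimes>\<^bsub>G\<^esub> dx" using x dx_def by (simp flip: G.m_assoc)
      have "(\<alpha> [^]\<^bsub>A\<^esub> Suc n) x = \<alpha> ((\<alpha> [^]\<^bsub>A\<^esub> n) x)"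
        unfolding A.nat_pow_Suc2[OF aA] by (rule multA[OF aA A.nat_pow_closed[OF aA] x])
      also have "\<dots> = \<alpha> (x \<otimes>\<^bsub>G\<^esub> dx [^]\<^bsub>G\<^esub> n)" using Suc x dx_def by simp
      also have "\<dots> = x \<otimes>\<^bsub>G\<^esub> dx \<otimes>\<^bsub>G\<^esub> dx [^]\<^bsub>G\<^esub> n"
        using x dxc pV assms(8) ax by simp
      also have "\<dots> = x \<otimes>\<^bsub>G\<^esub> dx [^]\<^bsub>G\<^esub> Suc n"
        using x dxc by (simp add: G.m_assoc G.nat_pow_Suc2[of dx n, symmetric] del: G.nat_pow_Suc)
      finally show "(\<alpha> [^]\<^bsub>A\<^esub> Suc n) x = x \<otimes>\<^bsub>G\<^esub> (inv\<^bsub>G\<^esub> x \<otimes>\<^bsub>G\<^esub> \<alpha> x) [^]\<^bsub>G\<^esub> Suc n"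
        using dx_def by simp
    qed
  qed
  define e where "e = subgroup_exponent G V"
  have ex: "0 < order G \<and> (\<forall>h\<in>V. h [^]\<^bsub>G\<^esub> order G = \<one>\<^bsub>G\<^esub>)"
    using assms(2) G.pow_order_eq_1 V.subset
    by (auto simp: order_def card_gt_0_iff)
  have e: "0 < e \<and> (\<forall>h\<in>V. h [^]\<^bsub>G\<^esub> e = \<one>\<^bsub>G\<^esub>)"
    unfolding e_def subgroup_exponent_def by (rule LeastI[of _ "order G"], rule ex)
  have "\<alpha> [^]\<^bsub>A\<^esub> e = \<one>\<^bsub>A\<^esub>"
  proof -
    have p0: "\<alpha> [^]\<^bsub>A\<^esub> e \<in> auto G" using A.nat_pow_closed[OF aA] carrA by simp
    have p: "\<alpha> [^]\<^bsub>A\<^esub> e \<in> Bij (carrier G)" using p0 unfolding auto_def by blast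
    have o: "\<one>\<^bsub>A\<^esub> = (\<lambda>x\<in>carrier G. x)" by (simp add: A_def AutoGroup_def BijGroup_def)
    show ?thesis unfolding o
    proof (rule extensionalityI[of _ "carrier G"])
      show "\<alpha> [^]\<^bsub>A\<^esub> e \<in> extensional (carrier G)" using p by (simp add: Bij_def)
      show "(\<lambda>x\<in>carrier G. x) \<in> extensional (carrier G)" by simp
      fix x assume x: "x \<in> carrier G"
      have "inv\<^bsub>G\<^esub> x \<otimes>\<^bsub>G\<^esub> \<alpha> x \<in> V" using dV x by simp
      then show "(\<alpha> [^]\<^bsub>A\<^esub> e) x = (\<lambda>x\<in>carrier G. x) x"
        using pw x e by simp
    qed
  qed
  hence "A.ord \<alpha> dvd e" using A.pow_eq_id aA by blast
  hence "A.ord \<alpha> \<le> e" using e by (simp add: dvd_imp_le)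
  with part1 show ?thesis unfolding A_def e_def by simp
qed

end
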